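(* Let $n\ge2$ and $\Delta\subset B_n$ a proper ideal. Then for all $0\le i\le\lfloor\frac{n-1}{2}\rfloor$, $$g_i(\mathrm{Bier}(B_n,\Delta))=f_i(\Delta)-f_{n-i}(\Delta).$$
   Context: $B_n$ is the Boolean lattice of subsets of $[1,n]$. A proper ideal $\Delta\subset B_n$ is a nonempty family of subsets of $[1,n]$ closed under taking subsets with $[1,n]\notin\Delta$; $f_i(\Delta)$ is the number of sets of cardinality $i$ in $\Delta$. The Bier sphere $\mathrm{Bier}(B_n,\Delta)$ is the simplicial complex whose faces are the pairs $(B,C)$ with $B\subsetneq C\subseteq[1,n]$, $B\in\Delta$, $C\notin\Delta$, with $(B',C')$ a face of $(B,C)$ iff $B'\subseteq B$ and $C\subseteq C'$; the face $(B,C)$ has $|B|+n-|C|$ vertices, and all facets have $n-1$ vertices. For such a complex $\Gamma$, $f_j(\Gamma)$ is the number of faces with $j$ vertices ($f_0=1$), $h_i(\Gamma):=\sum_{j=0}^{n-1}(-1)^{i+j}\binom{n-1-j}{n-1-i}f_j(\Gamma)$ for $0\le i\le n-1$ ($h_i:=0$ otherwise), and $g_i(\Gamma):=h_i(\Gamma)-h_{i-1}(\Gamma)$ for $0\le i\le\lfloor\frac{n-1}2\rfloor$. *)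

theory Defs
  imports Main
begin

definition proper_ideal :: "nat \<Rightarrow> nat set set \<Rightarrow> bool" where
  "proper_ideal n \<Delta> \<longleftrightarrow> \<Delta> \<subseteq> Pow {1..n} \<and> \<Delta> \<noteq> {} \<and>
     (\<forall>A\<in>\<Delta>. \<forall>B. B \<subseteq> A \<longrightarrow> B \<in> \<Delta>) \<and> {1..n} \<notin> \<Delta>"

definition ideal_f :: "nat set set \<Rightarrow> nat \<Rightarrow> nat" where
  "ideal_f \<Delta> i = card {A \<in> \<Delta>. card A = i}"

definition bier_faces :: "nat \<Rightarrow> nat set set \<Rightarrow> (nat set \<times> nat set) set" where
  "bier_faces n \<Delta> = {(B, C). B \<subset> C \<and> C \<subseteq> {1..n} \<and> B \<in> \<Delta> \<and> C \<notin> \<Delta>}"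

definition bier_nverts :: "nat \<Rightarrow> nat set \<times> nat set \<Rightarrow> nat" where
  "bier_nverts n F = card (fst F) + n - card (snd F)"

definition bier_f :: "nat \<Rightarrow> nat set set \<Rightarrow> nat \<Rightarrow> nat" where
  "bier_f n \<Delta> j = card {F \<in> bier_faces n \<Delta>. bier_nverts n F = j}"

definition bier_h :: "nat \<Rightarrow> nat set set \<Rightarrow> nat \<Rightarrow> int" where
  "bier_h n \<Delta> i = (if i \<le> n - 1 then
     (\<Sum>j=0..n-1. (-1) ^ (i + j) * int ((n - 1 - j) choose (n - 1 - i)) * int (bier_f n \<Delta> j))
   else 0)"

definition bier_g :: "nat \<Rightarrow> nat set set \<Rightarrow> nat \<Rightarrow> int" where
  "bier_g n \<Delta> i = bier_h n \<Delta> i - (if i = 0 then 0 else bier_h n \<Delta> (i - 1))"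

end

theory Submission
  imports Defs "HOL-Computational_Algebra.Polynomial"
begin

lemma coeff_lin_pow:
  fixes a b :: "'a :: comm_semiring_1"
  shows "coeff ([:a, b:] ^ m) k = of_nat (m choose k) * b ^ k * a ^ (m - k)"
proof (cases "k \<le> m")
  case True then show ?thesis by (rule coeff_linear_poly_power)
next
  case False
  have "degree ([:a, b:] ^ m) \<le> m * degree [:a,b:]" by (metis degree_power_le mult.commute)
  also have "\<dots> \<le> m" by simp
  finally have "coeff ([:a, b:] ^ m) k = 0" using False by (intro coeff_eq_0) auto
  then show ?thesis using False by (simp add: binomial_eq_0)
qed

lemma sum_pow_Pow:
  fixes y :: "'a :: comm_semiring_1"
  assumes "finite T"
  shows "(\<Sum>D\<in>Pow T. y ^ card D) = (y + 1) ^ card T"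
  using assms
proof (induction T rule: finite_induct)
  case empty then show ?case by simp
next
  case (insert a T)
  have inj: "inj_on (insert a) (Pow T)" using insert.hyps
    unfolding inj_on_def by (metis PowD Diff_insert_absorb subset_iff)
  have disj: "Pow T \<inter> insert a ` Pow T = {}" using insert.hyps by auto
  have "(\<Sum>D\<in>Pow (insert a T). y ^ card D) = (\<Sum>D\<in>Pow T. y ^ card D) + (\<Sum>D\<in>insert a ` Pow T. y ^ card D)"
    unfolding Pow_insert using insert.hyps disj by (intro sum.union_disjoint) auto
  also have "(\<Sum>D\<in>insert a ` Pow T. y ^ card D) = (\<Sum>D\<in>Pow T. y ^ card (insert a D))"
    using inj by (simp add: sum.reindex)
  also have "\<dots> = (\<Sum>D\<in>Pow T. y * y ^ card D)"
  proof (rule sum.cong)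
    fix D assume "D \<in> Pow T"
    then have "finite D" "a \<notin> D" using insert.hyps finite_subset by auto
    then show "y ^ card (insert a D) = y * y ^ card D" by simp
  qed simp
  finally show ?case using insert.hyps insert.IH by (simp add: sum_distrib_left[symmetric] algebra_simps)
qed

lemma sum_pow_above:
  fixes y :: "'a :: comm_semiring_1"
  assumes "finite S" "B \<subseteq> S"
  shows "(\<Sum>C\<in>{C. B \<subseteq> C \<and> C \<subseteq> S}. y ^ card (C - B)) = (y + 1) ^ card (S - B)"
proof -
  have "(\<Sum>C\<in>{C. B \<subseteq> C \<and> C \<subseteq> S}. y ^ card (C - B)) = (\<Sum>D\<in>Pow (S - B). y ^ card D)"
    by (rule sum.reindex_bij_witness[where i="\<lambda>D. B \<union> D" and j="\<lambda>C. C - B"]) (use assms in auto)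
  also have "\<dots> = (y + 1) ^ card (S - B)" using assms by (intro sum_pow_Pow) auto
  finally show ?thesis .
qed

lemma sum_pow_below:
  fixes y :: "'a :: comm_semiring_1"
  assumes "finite C"
  shows "(\<Sum>B\<in>Pow C. y ^ card (C - B)) = (y + 1) ^ card C"
proof -
  have "(\<Sum>B\<in>Pow C. y ^ card (C - B)) = (\<Sum>D\<in>Pow C. y ^ card D)"
    by (rule sum.reindex_bij_witness[where i="\<lambda>D. C - D" and j="\<lambda>B. C - B"]) auto
  also have "\<dots> = (y + 1) ^ card C" using assms by (intro sum_pow_Pow) auto
  finally show ?thesis .
qed

theorem theorem9:
  fixes n :: nat and \<Delta> :: "nat set set"
  assumes "n \<ge> 2" and "proper_ideal n \<Delta>"
  shows "\<forall>i \<le> (n - 1) div 2. bier_g n \<Delta> i = int (ideal_f \<Delta> i) - int (ideal_f \<Delta> (n - i))"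
proof -
  define S where "S = {1..n}"
  define d where "d = n - 1"
  define y :: "int poly" where "y = [:-1, 1:]"
  define X :: "int poly" where "X = [:0, 1:]"
  have Xy: "y + 1 = X" unfolding X_def y_def by (simp add: one_pCons)
  have fS: "finite S" unfolding S_def by simp
  have DS: "\<Delta> \<subseteq> Pow S" and closed: "\<And>A B. A \<in> \<Delta> \<Longrightarrow> B \<subseteq> A \<Longrightarrow> B \<in> \<Delta>"
    and SnD: "S \<notin> \<Delta>"
    using assms(2) unfolding proper_ideal_def S_def by auto
  have fD: "finite \<Delta>" using finite_subset[OF DS] fS by simp
  have cardS: "card S = n" unfolding S_def by simp
  define faces where "faces = bier_faces n \<Delta>"
  have faces_eq: "faces = Sigma \<Delta> (\<lambda>B. {C. B \<subseteq> C \<and> C \<subseteq> S} - \<Delta>)"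
    unfolding faces_def bier_faces_def S_def by auto
  have ffaces: "finite faces" unfolding faces_eq using fD fS
    by (intro finite_SigmaI) auto
  have cardB: "\<And>B. B \<in> \<Delta> \<Longrightarrow> card B \<le> n" using DS fS cardS card_mono by blast
  have face_card: "\<And>F. F \<in> faces \<Longrightarrow> card (fst F) < card (snd F) \<and> card (snd F) \<le> n"
  proof -
    fix F assume "F \<in> faces"
    then obtain B C where F: "F = (B, C)" "B \<subset> C" "C \<subseteq> S" unfolding faces_def bier_faces_def S_def by auto
    have "finite C" using F fS finite_subset by blast
    then show "card (fst F) < card (snd F) \<and> card (snd F) \<le> n"
      using F psubset_card_mono card_mono[OF fS F(3)] cardS by auto
  qed
  define P :: "int poly" where "P = (\<Sum>j=0..d. of_nat (bier_f n \<Delta> j) * y ^ (d - j))"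
  have P_faces: "P = (\<Sum>F\<in>faces. y ^ (d - bier_nverts n F))"
  proof -
    have "(\<Sum>F\<in>faces. y ^ (d - bier_nverts n F)) = (\<Sum>j=0..d. \<Sum>F\<in>{F\<in>faces. bier_nverts n F = j}. y ^ (d - bier_nverts n F))"
      using ffaces face_card unfolding bier_nverts_def d_def
      by (intro sum.group[symmetric]) fastforce+
    also have "\<dots> = P" unfolding P_def bier_f_def faces_def by simp
    finally show ?thesis by simp
  qed
  have yP: "y * P = (\<Sum>F\<in>faces. y ^ (card (snd F) - card (fst F)))"
    unfolding P_faces sum_distrib_left
  proof (rule sum.cong)
    fix F assume "F \<in> faces"
    then have "Suc (d - bier_nverts n F) = card (snd F) - card (fst F)"
      using face_card unfolding d_def bier_nverts_def by fastforce
    then show "y * y ^ (d - bier_nverts n F) = y ^ (card (snd F) - card (fst F))"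
      by (metis power_Suc)
  qed simp
  have fU: "\<And>B. finite {C. B \<subseteq> C \<and> C \<subseteq> S}" using fS by (simp add: finite_subset[of _ "Pow S"] subset_eq)
  have "y * P = (\<Sum>B\<in>\<Delta>. \<Sum>C\<in>{C. B \<subseteq> C \<and> C \<subseteq> S} - \<Delta>. y ^ (card C - card B))"
    unfolding yP faces_eq using fD fU by (subst sum.Sigma) (auto simp: split_beta)
  also have "\<dots> = (\<Sum>B\<in>\<Delta>. (\<Sum>C\<in>{C. B \<subseteq> C \<and> C \<subseteq> S}. y ^ (card C - card B))
      - (\<Sum>C\<in>{C\<in>\<Delta>. B \<subseteq> C}. y ^ (card C - card B)))"
  proof (rule sum.cong)
    fix B assume B: "B \<in> \<Delta>"
    have e: "{C\<in>\<Delta>. B \<subseteq> C} = {C. B \<subseteq> C \<and> C \<subseteq> S} \<inter> \<Delta>" using DS by auto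
    show "(\<Sum>C\<in>{C. B \<subseteq> C \<and> C \<subseteq> S} - \<Delta>. y ^ (card C - card B)) =
      (\<Sum>C\<in>{C. B \<subseteq> C \<and> C \<subseteq> S}. y ^ (card C - card B)) - (\<Sum>C\<in>{C\<in>\<Delta>. B \<subseteq> C}. y ^ (card C - card B))"
    proof -
      let ?U = "{C. B \<subseteq> C \<and> C \<subseteq> S}"
      have "(\<Sum>C\<in>?U. y ^ (card C - card B)) = (\<Sum>C\<in>?U - ?U \<inter> \<Delta>. y ^ (card C - card B)) + (\<Sum>C\<in>?U \<inter> \<Delta>. y ^ (card C - card B))"
        by (rule sum.subset_diff) (auto simp: fU)
      moreover have "?U - ?U \<inter> \<Delta> = ?U - \<Delta>" by blast
      ultimately show ?thesis unfolding e by simp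
    qed
  qed simp
  also have "\<dots> = (\<Sum>B\<in>\<Delta>. X ^ (n - card B)) - (\<Sum>C\<in>\<Delta>. X ^ card C)"
  proof -
    have 1: "(\<Sum>B\<in>\<Delta>. \<Sum>C\<in>{C. B \<subseteq> C \<and> C \<subseteq> S}. y ^ (card C - card B)) = (\<Sum>B\<in>\<Delta>. X ^ (n - card B))"
    proof (rule sum.cong)
      fix B assume B: "B \<in> \<Delta>"
      then have BS: "B \<subseteq> S" using DS by auto
      have fB: "finite B" using BS fS finite_subset by blast
      have "(\<Sum>C\<in>{C. B \<subseteq> C \<and> C \<subseteq> S}. y ^ (card C - card B)) = (\<Sum>C\<in>{C. B \<subseteq> C \<and> C \<subseteq> S}. y ^ card (C - B))"
        by (intro sum.cong refl) (simp add: card_Diff_subset fB)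
      also have "\<dots> = X ^ card (S - B)" using sum_pow_above[OF fS BS, of y] Xy by simp
      also have "card (S - B) = n - card B" using BS fB cardS by (simp add: card_Diff_subset)
      finally show "(\<Sum>C\<in>{C. B \<subseteq> C \<and> C \<subseteq> S}. y ^ (card C - card B)) = X ^ (n - card B)" .
    qed simp
    have 2: "(\<Sum>B\<in>\<Delta>. \<Sum>C\<in>{C\<in>\<Delta>. B \<subseteq> C}. y ^ (card C - card B)) = (\<Sum>C\<in>\<Delta>. \<Sum>B\<in>{B\<in>\<Delta>. B \<subseteq> C}. y ^ (card C - card B))"
      using fD by (rule sum.swap_restrict[OF _ fD])
    also have "\<dots> = (\<Sum>C\<in>\<Delta>. X ^ card C)"
    proof (rule sum.cong)
      fix C assume C: "C \<in> \<Delta>"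
      then have fC: "finite C" using DS fS finite_subset by blast
      have e: "{B\<in>\<Delta>. B \<subseteq> C} = Pow C" using C closed by auto
      have "(\<Sum>B\<in>{B\<in>\<Delta>. B \<subseteq> C}. y ^ (card C - card B)) = (\<Sum>B\<in>Pow C. y ^ card (C - B))"
        unfolding e by (intro sum.cong refl) (auto simp add: card_Diff_subset fC finite_subset)
      also have "\<dots> = X ^ card C" using sum_pow_below[OF fC, of y] Xy by simp
      finally show "(\<Sum>B\<in>{B\<in>\<Delta>. B \<subseteq> C}. y ^ (card C - card B)) = X ^ card C" .
    qed simp
    finally show ?thesis using 1 by (simp add: sum_subtractf)
  qed
  finally have key: "y * P = (\<Sum>B\<in>\<Delta>. X ^ (n - card B)) - (\<Sum>C\<in>\<Delta>. X ^ card C)" .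
  have cP: "coeff P k = (\<Sum>j=0..d. of_nat (bier_f n \<Delta> j) * (of_nat ((d - j) choose k) * (-1) ^ (d - j - k)))" for k
    unfolding P_def coeff_sum y_def by (simp add: coeff_lin_pow of_nat_poly)
  have hP: "bier_h n \<Delta> i = coeff P (d - i)" if "i \<le> d" for i
  proof -
    have "bier_h n \<Delta> i = (\<Sum>j=0..d. (-1) ^ (i + j) * int ((d - j) choose (d - i)) * int (bier_f n \<Delta> j))"
      using that unfolding bier_h_def d_def by simp
    also have "\<dots> = coeff P (d - i)" unfolding cP
    proof (rule sum.cong)
      fix j assume j: "j \<in> {0..d}"
      show "(-1) ^ (i + j) * int ((d - j) choose (d - i)) * int (bier_f n \<Delta> j) =
        of_nat (bier_f n \<Delta> j) * (of_nat ((d - j) choose (d - i)) * (-1) ^ (d - j - (d - i)))"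
      proof (cases "j \<le> i")
        case True
        then have "d - j - (d - i) = i - j" using that by simp
        moreover have "(-1::int) ^ (i + j) = (-1) ^ (i - j)"
        proof -
          have "i + j = (i - j) + 2 * j" using True by simp
          then have "(-1::int) ^ (i + j) = (-1) ^ (i - j) * ((-1) ^ 2) ^ j" by (metis power_add power_mult)
          then show ?thesis by simp
        qed
        ultimately show ?thesis by simp
      next
        case False
        then have "d - j < d - i" using that j by auto
        then show ?thesis by simp
      qed
    qed simp
    finally show ?thesis .
  qed
  have Pn: "coeff P n = 0" unfolding cP d_def using assms(1) by (intro sum.neutral) auto
  have cX: "coeff (X ^ k) m = (if m = k then 1 else 0)" for k m
    unfolding X_def by (simp add: coeff_lin_pow) linarith
  show ?thesis
  proof (intro allI impI)
    fix i assume i: "i \<le> (n - 1) div 2"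
    then have id: "i \<le> d" unfolding d_def by simp
    have ni: "n - i = Suc (d - i)" using id assms(1) unfolding d_def by simp
    have lhs: "coeff (y * P) (n - i) = coeff P (d - i) - coeff P (n - i)"
      unfolding ni y_def by simp
    have "coeff (y * P) (n - i) = bier_g n \<Delta> i"
    proof (cases "i = 0")
      case True
      then show ?thesis using lhs hP[OF id] Pn unfolding bier_g_def by simp
    next
      case False
      then have "n - i = d - (i - 1)" using id unfolding d_def by simp
      then show ?thesis using lhs hP[OF id] hP[of "i - 1"] id False unfolding bier_g_def by simp
    qed
    moreover have "coeff (y * P) (n - i) = int (ideal_f \<Delta> i) - int (ideal_f \<Delta> (n - i))"
    proof -
      have a: "(\<Sum>B\<in>\<Delta>. coeff (X ^ (n - card B)) (n - i)) = int (ideal_f \<Delta> i)"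
      proof -
        have "(\<Sum>B\<in>\<Delta>. coeff (X ^ (n - card B)) (n - i)) = (\<Sum>B\<in>\<Delta>. if card B = i then 1 else 0)"
          using cardB id unfolding d_def cX by (intro sum.cong refl) (metis diff_diff_cancel le_trans diff_le_self)
        also have "\<dots> = int (ideal_f \<Delta> i)" unfolding ideal_f_def
          using fD by (simp add: sum.If_cases Int_def conj_commute)
        finally show ?thesis .
      qed
      have b: "(\<Sum>C\<in>\<Delta>. coeff (X ^ card C) (n - i)) = int (ideal_f \<Delta> (n - i))"
      proof -
        have "(\<Sum>C\<in>\<Delta>. coeff (X ^ card C) (n - i)) = (\<Sum>C\<in>\<Delta>. if card C = n - i then 1 else 0)"
          unfolding cX by (intro sum.cong refl) auto
        also have "\<dots> = int (ideal_f \<Delta> (n - i))" unfolding ideal_f_def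
          using fD by (simp add: sum.If_cases Int_def conj_commute)
        finally show ?thesis .
      qed
      show ?thesis unfolding key coeff_diff coeff_sum a b ..
    qed
    ultimately show "bier_g n \<Delta> i = int (ideal_f \<Delta> i) - int (ideal_f \<Delta> (n - i))" by simp
  qed
qed

end
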